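(* Assume the bound condition (B) holds with constants $A,D>0$ and that $\max\{\Delta x,\Delta y\}\le 2D/A$. Suppose $f\equiv 0$. Then, for any time step $\Delta t=T/N_t$ (no restriction on $\Delta t$), any grid function $v$ satisfying the scheme (IFDS) satisfies $$\|v^{k}\|_\infty\le \|v^{0}\|_\infty\qquad\text{for all }k=1,\dots,N_t .$$
   Context: Fix $0<\alpha<1$, $T>0$ and a rectangle $\Omega=(x_L,x_R)\times(y_L,y_R)$. Let $a,b,c,d,f$ be real functions on $\overline\Omega\times[0,T]$ and $\psi$ a real function on $\overline\Omega$. Grid: for positive integers $N_x,N_y,N_t$ put $\Delta x=(x_R-x_L)/N_x$, $\Delta y=(y_R-y_L)/N_y$, $\Delta t=T/N_t$, $x_i=x_L+i\Delta x$, $y_j=y_L+j\Delta y$, $t_k=k\Delta t$, and for a function $g$ write $g_{i,j}^k=g(x_i,y_j,t_k)$. Let $\sigma_{\alpha,\Delta t}=\frac{1}{(\Delta t)^\alpha\Gamma(2-\alpha)}$ and $\omega_s=(s+1)^{1-\alpha}-s^{1-\alpha}$ for $s\ge0$. Scheme (IFDS): a grid function $(v_{i,j}^k)_{0\le i\le N_x,\,0\le j\le N_y,\,0\le k\le N_t}$ with $v_{i,j}^0=\psi(x_i,y_j)$, $v_{i,j}^k=0$ whenever $i\in\{0,N_x\}$ or $j\in\{0,N_y\}$ (for $k\ge1$), and for all $1\le i\le N_x-1$, $1\le j\le N_y-1$, $0\le k\le N_t-1$: $$\sigma_{\alpha,\Delta t}\sum_{s=0}^{k}\omega_s\big(v_{i,j}^{k-s+1}-v_{i,j}^{k-s}\big)+a_{i,j}^{k+1}\frac{v_{i+1,j}^{k+1}-v_{i-1,j}^{k+1}}{2\Delta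 x}+b_{i,j}^{k+1}\frac{v_{i,j+1}^{k+1}-v_{i,j-1}^{k+1}}{2\Delta y}$$ $$=c_{i,j}^{k+1}\frac{v_{i+1,j}^{k+1}-2v_{i,j}^{k+1}+v_{i-1,j}^{k+1}}{(\Delta x)^2}+d_{i,j}^{k+1}\frac{v_{i,j+1}^{k+1}-2v_{i,j}^{k+1}+v_{i,j-1}^{k+1}}{(\Delta y)^2}+f_{i,j}^{k+1}.$$ Norm: $\|v^k\|_\infty=\max_{1\le i\le N_x-1,\,1\le j\le N_y-1}|v_{i,j}^k|$. Bound condition (B): there are constants $A>0$, $D>0$ such that for all $(x,y,t)\in\overline\Omega\times[0,T]$: $0\le a(x,y,t)\le A$, $0\le b(x,y,t)\le A$, $c(x,y,t)\ge D$, $d(x,y,t)\ge D$. *)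

theory Defs
  imports "HOL-Analysis.Analysis"
begin

definition sigma_coef :: "real \<Rightarrow> real \<Rightarrow> real" where
  "sigma_coef \<alpha> dt = 1 / (dt powr \<alpha> * Gamma (2 - \<alpha>))"

definition omega_w :: "real \<Rightarrow> nat \<Rightarrow> real" where
  "omega_w \<alpha> s = (real s + 1) powr (1 - \<alpha>) - real s powr (1 - \<alpha>)"

definition IFDS ::
  "real \<Rightarrow> real \<Rightarrow> real \<Rightarrow> real \<Rightarrow> real \<Rightarrow> real \<Rightarrow> nat \<Rightarrow> nat \<Rightarrow> nat \<Rightarrow>
   (real \<Rightarrow> real \<Rightarrow> real \<Rightarrow> real) \<Rightarrow> (real \<Rightarrow> real \<Rightarrow> real \<Rightarrow> real) \<Rightarrow>
   (real \<Rightarrow> real \<Rightarrow> real \<Rightarrow> real) \<Rightarrow> (real \<Rightarrow> real \<Rightarrow> real \<Rightarrow> real) \<Rightarrow>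
   (real \<Rightarrow> real \<Rightarrow> real \<Rightarrow> real) \<Rightarrow> (real \<Rightarrow> real \<Rightarrow> real) \<Rightarrow>
   (nat \<Rightarrow> nat \<Rightarrow> nat \<Rightarrow> real) \<Rightarrow> bool" where
  "IFDS \<alpha> T xL xR yL yR Nx Ny Nt a b c d f \<psi> v \<longleftrightarrow>
    (let dx = (xR - xL) / real Nx; dy = (yR - yL) / real Ny; dt = T / real Nt;
         X = (\<lambda>i. xL + real i * dx); Y = (\<lambda>j. yL + real j * dy); Tk = (\<lambda>k. real k * dt)
     in (\<forall>i\<le>Nx. \<forall>j\<le>Ny. v i j 0 = \<psi> (X i) (Y j))
      \<and> (\<forall>i\<le>Nx. \<forall>j\<le>Ny. \<forall>k. 1 \<le> k \<and> k \<le> Nt \<and> (i = 0 \<or> i = Nx \<or> j = 0 \<or> j = Ny) \<longrightarrow> v i j k = 0)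
      \<and> (\<forall>i j k. 1 \<le> i \<and> i \<le> Nx - 1 \<and> 1 \<le> j \<and> j \<le> Ny - 1 \<and> k \<le> Nt - 1 \<longrightarrow>
           sigma_coef \<alpha> dt * (\<Sum>s=0..k. omega_w \<alpha> s * (v i j (k - s + 1) - v i j (k - s)))
           + a (X i) (Y j) (Tk (k+1)) * (v (i+1) j (k+1) - v (i-1) j (k+1)) / (2 * dx)
           + b (X i) (Y j) (Tk (k+1)) * (v i (j+1) (k+1) - v i (j-1) (k+1)) / (2 * dy)
         = c (X i) (Y j) (Tk (k+1)) * (v (i+1) j (k+1) - 2 * v i j (k+1) + v (i-1) j (k+1)) / dx\<^sup>2
           + d (X i) (Y j) (Tk (k+1)) * (v i (j+1) (k+1) - 2 * v i j (k+1) + v i (j-1) (k+1)) / dy\<^sup>2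
           + f (X i) (Y j) (Tk (k+1))))"

text \<open>Discrete max norm over interior nodes (0 if the interior is empty).\<close>
definition grid_norm :: "nat \<Rightarrow> nat \<Rightarrow> (nat \<Rightarrow> nat \<Rightarrow> nat \<Rightarrow> real) \<Rightarrow> nat \<Rightarrow> real" where
  "grid_norm Nx Ny v k =
     Max (insert 0 ((\<lambda>(i,j). \<bar>v i j k\<bar>) ` ({1..Nx - 1} \<times> {1..Ny - 1})))"

end

theory Submission
  imports Defs
begin

lemma omega0: "omega_w al 0 = 1"
  by (simp add: omega_w_def)

lemma omega_nonneg: "al < 1 \<Longrightarrow> 0 \<le> omega_w al s"
  unfolding omega_w_def by (simp add: powr_mono2)

lemma omega_mono:
  assumes "0 < al" "al < 1"
  shows "omega_w al (Suc s) \<le> omega_w al s"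
proof (cases s)
  case 0
  have "(2::real) powr (1 - al) \<le> 2 powr 1"
    by (rule powr_mono) (use assms in auto)
  then show ?thesis using 0 by (simp add: omega_w_def)
next
  case (Suc m)
  define g where "g = (\<lambda>x::real. (x+1) powr (1-al) - x powr (1-al))"
  define g' where "g' = (\<lambda>x::real. (1-al) * (x+1) powr (1-al-1) - (1-al) * x powr (1-al-1))"
  have "g (real s + 1) \<le> g (real s)"
  proof (rule deriv_nonpos_imp_antimono[where a="real s" and b="real s + 1" and g'=g'])
    fix x assume x: "x \<in> {real s..real s + 1}"
    then have xp: "x > 0" using Suc by auto
    show "(g has_real_derivative g' x) (at x)"
    proof -
      have d1: "((\<lambda>x. (x+1) powr (1-al)) has_real_derivative (1-al) * (x+1) powr (1-al - of_nat 1) * 1) (at x)"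
        by (rule DERIV_fun_powr) (use xp in \<open>auto intro!: derivative_eq_intros\<close>)
      have d2: "((\<lambda>x. x powr (1-al)) has_real_derivative (1-al) * x powr (1-al - 1)) (at x)"
        by (rule has_real_derivative_powr) (use xp in auto)
      show ?thesis using DERIV_diff[OF d1 d2] by (simp add: g_def g'_def)
    qed
    have "(x+1) powr (1-al-1) \<le> x powr (1-al-1)"
      using xp assms by (intro powr_mono2') auto
    then have "(1-al) * (x+1) powr (1-al-1) \<le> (1-al) * x powr (1-al-1)"
      using assms by (intro mult_left_mono) auto
    then show "g' x \<le> 0" unfolding g'_def by linarith
  qed auto
  then show ?thesis by (simp add: g_def omega_w_def add.commute add.left_commute)
qed

lemma time_sum:
  fixes w :: "nat \<Rightarrow> real" and g :: "nat \<Rightarrow> real"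
  shows "w 0 * g (Suc n) - (\<Sum>s=0..n. w s * (g (n - s + 1) - g (n - s)))
     = (\<Sum>m=0..n. (w (n-m) - (if m=0 then 0 else w (n-m+1))) * g m)"
proof (induction n arbitrary: w)
  case 0
  then show ?case by (simp add: algebra_simps)
next
  case (Suc n)
  define w' where "w' = (\<lambda>s. w (Suc s))"
  have L: "(\<Sum>s=0..Suc n. w s * (g (Suc n - s + 1) - g (Suc n - s)))
     = w 0 * (g (Suc (Suc n)) - g (Suc n)) + (\<Sum>s=0..n. w' s * (g (n - s + 1) - g (n - s)))"
    by (subst sum.atLeast0_atMost_Suc_shift) (simp add: w'_def)
  have R: "(\<Sum>m=0..Suc n. (w (Suc n-m) - (if m=0 then 0 else w (Suc n-m+1))) * g m)
     = (\<Sum>m=0..n. (w' (n-m) - (if m=0 then 0 else w' (n-m+1))) * g m) + (w 0 - w 1) * g (Suc n)"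
    by (subst sum.atLeast0_atMost_Suc) (auto simp: w'_def Suc_diff_le intro!: sum.cong)
  show ?case using Suc.IH[of w'] unfolding L R by (simp add: w'_def algebra_simps)
qed
lemma time_bound:
  fixes g :: "nat \<Rightarrow> real"
  assumes al: "0 < al" "al < 1" and gb: "\<And>m. m \<le> n \<Longrightarrow> \<bar>g m\<bar> \<le> P"
  shows "\<bar>g (Suc n) - (\<Sum>s=0..n. omega_w al s * (g (n - s + 1) - g (n - s)))\<bar> \<le> P"
proof -
  define e where "e = (\<lambda>m. omega_w al (n-m) - (if m=0 then 0 else omega_w al (n-m+1)))"
  have eq: "g (Suc n) - (\<Sum>s=0..n. omega_w al s * (g (n - s + 1) - g (n - s))) = (\<Sum>m=0..n. e m * g m)"
    using time_sum[of "omega_w al" g n] by (simp add: omega0 e_def)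
  have e1: "(\<Sum>m=0..n. e m) = 1"
    using time_sum[of "omega_w al" "\<lambda>_. 1" n] by (simp add: omega0 e_def)
  have enn: "e m \<ge> 0" if "m \<le> n" for m
  proof (cases "m = 0")
    case True then show ?thesis using omega_nonneg[OF al(2)] by (simp add: e_def)
  next
    case False
    then have "n - m + 1 = Suc (n - m)" by simp
    then show ?thesis using False omega_mono[OF al, of "n-m"] by (simp add: e_def)
  qed
  have "\<bar>\<Sum>m=0..n. e m * g m\<bar> \<le> (\<Sum>m=0..n. \<bar>e m * g m\<bar>)" by (rule sum_abs)
  also have "\<dots> \<le> (\<Sum>m=0..n. e m * P)"
  proof (rule sum_mono)
    fix m assume "m \<in> {0..n}"
    then have "m \<le> n" by simp
    then show "\<bar>e m * g m\<bar> \<le> e m * P"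
      using enn[of m] gb[of m] by (simp add: abs_mult mult_left_mono)
  qed
  also have "\<dots> = P" using e1 by (simp add: sum_distrib_right[symmetric])
  finally show ?thesis unfolding eq .
qed
lemma node_step:
  fixes sg p q r t u H E W Nn S M P :: real
  assumes eq: "sg * (u - H) + q * (E - W) + r * (Nn - S) = p * (E - 2*u + W) + t * (Nn - 2*u + S)"
    and sg: "sg > 0" and qp: "\<bar>q\<bar> \<le> p" and rt: "\<bar>r\<bar> \<le> t"
    and bE: "\<bar>E\<bar> \<le> M" and bW: "\<bar>W\<bar> \<le> M" and bN: "\<bar>Nn\<bar> \<le> M" and bS: "\<bar>S\<bar> \<le> M"
    and uM: "\<bar>u\<bar> = M" and HP: "\<bar>H\<bar> \<le> P"
  shows "M \<le> P"
proof -
  have e2: "u * (sg + 2*p + 2*t) = sg * H + (p - q) * E + (p + q) * W + (t - r) * Nn + (t + r) * S"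
    using eq by (simp add: algebra_simps)
  have "\<bar>u\<bar> * (sg + 2*p + 2*t) = \<bar>sg * H + (p - q) * E + (p + q) * W + (t - r) * Nn + (t + r) * S\<bar>"
    using sg qp rt by (simp add: e2[symmetric] abs_mult)
  also have "\<dots> \<le> sg * \<bar>H\<bar> + (p - q) * \<bar>E\<bar> + (p + q) * \<bar>W\<bar> + (t - r) * \<bar>Nn\<bar> + (t + r) * \<bar>S\<bar>"
  proof -
    have c: "p - q \<ge> 0" "p + q \<ge> 0" "t - r \<ge> 0" "t + r \<ge> 0" using qp rt by auto
    have tri: "\<And>a1 a2 a3 a4 a5::real. \<bar>a1+a2+a3+a4+a5\<bar> \<le> \<bar>a1\<bar>+\<bar>a2\<bar>+\<bar>a3\<bar>+\<bar>a4\<bar>+\<bar>a5\<bar>"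
      by linarith
    show ?thesis using tri[of "sg * H" "(p - q) * E" "(p + q) * W" "(t - r) * Nn" "(t + r) * S"] c sg
      by (simp add: abs_mult)
  qed
  also have "\<dots> \<le> sg * P + (p - q) * M + (p + q) * M + (t - r) * M + (t + r) * M"
    using sg qp rt bE bW bN bS HP
    by (intro add_mono mult_left_mono) auto
  finally have "M * (sg + 2*p + 2*t) \<le> sg * P + (p - q) * M + (p + q) * M + (t - r) * M + (t + r) * M"
    using uM by simp
  then have "sg * M \<le> sg * P" by (simp add: algebra_simps)
  then show ?thesis using sg by simp
qed

theorem mainTheorem1:
  fixes \<alpha> T xL xR yL yR A D :: real
    and Nx Ny Nt :: nat
    and a b c d f :: "real \<Rightarrow> real \<Rightarrow> real \<Rightarrow> real"
    and \<psi> :: "real \<Rightarrow> real \<Rightarrow> real"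
    and v :: "nat \<Rightarrow> nat \<Rightarrow> nat \<Rightarrow> real"
  assumes "0 < \<alpha>" "\<alpha> < 1" "0 < T" "xL < xR" "yL < yR"
    and "0 < Nx" "0 < Ny" "0 < Nt"
    and "0 < A" "0 < D"
    and bounds: "\<And>x y t. xL \<le> x \<Longrightarrow> x \<le> xR \<Longrightarrow> yL \<le> y \<Longrightarrow> y \<le> yR \<Longrightarrow> 0 \<le> t \<Longrightarrow> t \<le> T \<Longrightarrow>
        0 \<le> a x y t \<and> a x y t \<le> A \<and> 0 \<le> b x y t \<and> b x y t \<le> A \<and> D \<le> c x y t \<and> D \<le> d x y t"
    and mesh: "max ((xR - xL) / real Nx) ((yR - yL) / real Ny) \<le> 2 * D / A"
    and f0: "\<And>x y t. f x y t = 0"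
    and scheme: "IFDS \<alpha> T xL xR yL yR Nx Ny Nt a b c d f \<psi> v"
  shows "\<forall>k. 1 \<le> k \<and> k \<le> Nt \<longrightarrow> grid_norm Nx Ny v k \<le> grid_norm Nx Ny v 0"
proof -
  note as = assms
  define dx where "dx = (xR - xL) / real Nx"
  define dy where "dy = (yR - yL) / real Ny"
  define dt where "dt = T / real Nt"
  define X where "X = (\<lambda>i::nat. xL + real i * dx)"
  define Y where "Y = (\<lambda>j::nat. yL + real j * dy)"
  define Tk where "Tk = (\<lambda>k::nat. real k * dt)"
  define sg where "sg = sigma_coef \<alpha> dt"
  define N where "N = grid_norm Nx Ny v"
  have dxp: "dx > 0" using as by (simp add: dx_def)
  have dyp: "dy > 0" using as by (simp add: dy_def)
  have dtp: "dt > 0" using as by (simp add: dt_def)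
  have sgp: "sg > 0" using dtp as
    by (simp add: sg_def sigma_coef_def Gamma_real_pos)
  have bnd: "\<forall>i\<le>Nx. \<forall>j\<le>Ny. \<forall>k. 1 \<le> k \<and> k \<le> Nt \<and> (i = 0 \<or> i = Nx \<or> j = 0 \<or> j = Ny) \<longrightarrow> v i j k = 0"
    and sch: "\<And>i j k. 1 \<le> i \<Longrightarrow> i \<le> Nx - 1 \<Longrightarrow> 1 \<le> j \<Longrightarrow> j \<le> Ny - 1 \<Longrightarrow> k \<le> Nt - 1 \<Longrightarrow>
           sg * (\<Sum>s=0..k. omega_w \<alpha> s * (v i j (k - s + 1) - v i j (k - s)))
           + a (X i) (Y j) (Tk (k+1)) * (v (i+1) j (k+1) - v (i-1) j (k+1)) / (2 * dx)
           + b (X i) (Y j) (Tk (k+1)) * (v i (j+1) (k+1) - v i (j-1) (k+1)) / (2 * dy)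
         = c (X i) (Y j) (Tk (k+1)) * (v (i+1) j (k+1) - 2 * v i j (k+1) + v (i-1) j (k+1)) / dx\<^sup>2
           + d (X i) (Y j) (Tk (k+1)) * (v i (j+1) (k+1) - 2 * v i j (k+1) + v i (j-1) (k+1)) / dy\<^sup>2"
    using scheme unfolding IFDS_def Let_def dx_def dy_def dt_def X_def Y_def Tk_def sg_def
    by (auto simp: f0)
  define I where "I = {1..Nx - 1} \<times> {1..Ny - 1}"
  have finI: "finite I" by (simp add: I_def)
  have Nge: "\<bar>v i j k\<bar> \<le> N k" if "1 \<le> i" "i \<le> Nx - 1" "1 \<le> j" "j \<le> Ny - 1" for i j k
    unfolding N_def grid_norm_def using that by (intro Max_ge) auto
  have N0: "N k \<ge> 0" for k
    unfolding N_def grid_norm_def by (intro Max_ge) auto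
  have Natt: "N k = 0 \<or> (\<exists>i j. 1 \<le> i \<and> i \<le> Nx - 1 \<and> 1 \<le> j \<and> j \<le> Ny - 1 \<and> \<bar>v i j k\<bar> = N k)" for k
  proof -
    have "N k \<in> insert 0 ((\<lambda>(i,j). \<bar>v i j k\<bar>) ` ({1..Nx - 1} \<times> {1..Ny - 1}))"
      unfolding N_def grid_norm_def by (rule Max_in) auto
    then show ?thesis by fastforce
  qed
  have Nb: "\<bar>v i j k\<bar> \<le> N k" if "i \<le> Nx" "j \<le> Ny" "1 \<le> k" "k \<le> Nt" for i j k
  proof (cases "i = 0 \<or> i = Nx \<or> j = 0 \<or> j = Ny")
    case True
    then have "v i j k = 0" using bnd that by blast
    then show ?thesis using N0 by simp
  next
    case False
    then show ?thesis using that by (intro Nge) auto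
  qed
  have coef: "0 \<le> a (X i) (Y j) (Tk k) \<and> a (X i) (Y j) (Tk k) \<le> A \<and> 0 \<le> b (X i) (Y j) (Tk k)
      \<and> b (X i) (Y j) (Tk k) \<le> A \<and> D \<le> c (X i) (Y j) (Tk k) \<and> D \<le> d (X i) (Y j) (Tk k)"
    if "i \<le> Nx" "j \<le> Ny" "k \<le> Nt" for i j k
  proof (rule bounds)
    have "real i * dx \<le> real Nx * dx" using that dxp by (intro mult_right_mono) auto
    also have "real Nx * dx = xR - xL" using as by (simp add: dx_def)
    finally show "X i \<le> xR" by (simp add: X_def)
    show "xL \<le> X i" using dxp by (simp add: X_def)
    have "real j * dy \<le> real Ny * dy" using that dyp by (intro mult_right_mono) auto
    also have "real Ny * dy = yR - yL" using as by (simp add: dy_def)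
    finally show "Y j \<le> yR" by (simp add: Y_def)
    show "yL \<le> Y j" using dyp by (simp add: Y_def)
    have "real k * dt \<le> real Nt * dt" using that dtp by (intro mult_right_mono) auto
    also have "real Nt * dt = T" using as by (simp add: dt_def)
    finally show "Tk k \<le> T" by (simp add: Tk_def)
    show "0 \<le> Tk k" using dtp by (simp add: Tk_def)
  qed
  have dxA: "A * dx \<le> 2 * D" using mesh as by (simp add: dx_def pos_le_divide_eq mult.commute)
  have dyA: "A * dy \<le> 2 * D" using mesh as by (simp add: dy_def pos_le_divide_eq mult.commute)
  have step: "N (Suc k) \<le> P" if k: "k < Nt" and P: "\<And>m. m \<le> k \<Longrightarrow> N m \<le> P" "P \<ge> 0" for k P
  proof -
    consider "N (Suc k) = 0" | i j where "1 \<le> i" "i \<le> Nx - 1" "1 \<le> j" "j \<le> Ny - 1" "\<bar>v i j (Suc k)\<bar> = N (Suc k)"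
      using Natt[of "Suc k"] by blast
    then show ?thesis
    proof cases
      case 1 then show ?thesis using P by simp
    next
      case 2
      define av where "av = a (X i) (Y j) (Tk (k+1))"
      define bv where "bv = b (X i) (Y j) (Tk (k+1))"
      define cv where "cv = c (X i) (Y j) (Tk (k+1))"
      define dv where "dv = d (X i) (Y j) (Tk (k+1))"
      have cf: "0 \<le> av \<and> av \<le> A \<and> 0 \<le> bv \<and> bv \<le> A \<and> D \<le> cv \<and> D \<le> dv"
        unfolding av_def bv_def cv_def dv_def using 2 k by (intro coef) auto
      define H where "H = v i j (Suc k) - (\<Sum>s=0..k. omega_w \<alpha> s * (v i j (k - s + 1) - v i j (k - s)))"
      have HP: "\<bar>H\<bar> \<le> P" unfolding H_def
      proof (rule time_bound[OF as(1,2)])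
        fix m assume "m \<le> k"
        then show "\<bar>v i j m\<bar> \<le> P" using Nge[OF 2(1-4)] P(1)[of m] by (meson order_trans)
      qed
      have e: "sg * (v i j (Suc k) - H) + (av / (2*dx)) * (v (i+1) j (k+1) - v (i-1) j (k+1))
            + (bv / (2*dy)) * (v i (j+1) (k+1) - v i (j-1) (k+1))
          = (cv / dx\<^sup>2) * (v (i+1) j (k+1) - 2 * v i j (k+1) + v (i-1) j (k+1))
            + (dv / dy\<^sup>2) * (v i (j+1) (k+1) - 2 * v i j (k+1) + v i (j-1) (k+1))"
        using sch[OF 2(1-4), of k] k unfolding H_def av_def bv_def cv_def dv_def by simp
      have qp: "\<bar>av / (2*dx)\<bar> \<le> cv / dx\<^sup>2"
      proof -
        have "av * dx \<le> 2 * cv" using cf dxA dxp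
          by (smt (verit) mult_right_mono)
        then have "av * dx / (2 * dx\<^sup>2) \<le> 2 * cv / (2 * dx\<^sup>2)" using dxp
          by (intro divide_right_mono) auto
        then show ?thesis using cf dxp by (simp add: power2_eq_square)
      qed
      have rt: "\<bar>bv / (2*dy)\<bar> \<le> dv / dy\<^sup>2"
      proof -
        have "bv * dy \<le> 2 * dv" using cf dyA dyp
          by (smt (verit) mult_right_mono)
        then have "bv * dy / (2 * dy\<^sup>2) \<le> 2 * dv / (2 * dy\<^sup>2)" using dyp
          by (intro divide_right_mono) auto
        then show ?thesis using cf dyp by (simp add: power2_eq_square)
      qed
      show ?thesis
      proof (rule node_step[OF _ sgp qp rt _ _ _ _ 2(5) HP])
        show "sg * (v i j (Suc k) - H) + av / (2 * dx) * (v (i + 1) j (Suc k) - v (i - 1) j (Suc k)) +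
          bv / (2 * dy) * (v i (j + 1) (Suc k) - v i (j - 1) (Suc k)) =
          cv / dx\<^sup>2 * (v (i + 1) j (Suc k) - 2 * v i j (Suc k) + v (i - 1) j (Suc k)) +
          dv / dy\<^sup>2 * (v i (j + 1) (Suc k) - 2 * v i j (Suc k) + v i (j - 1) (Suc k))"
          using e by simp
        show "\<bar>v (i + 1) j (Suc k)\<bar> \<le> N (Suc k)" using 2 k by (intro Nb) auto
        show "\<bar>v (i - 1) j (Suc k)\<bar> \<le> N (Suc k)" using 2 k by (intro Nb) auto
        show "\<bar>v i (j + 1) (Suc k)\<bar> \<le> N (Suc k)" using 2 k by (intro Nb) auto
        show "\<bar>v i (j - 1) (Suc k)\<bar> \<le> N (Suc k)" using 2 k by (intro Nb) auto
      qed
    qed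
  qed
  have all: "m \<le> Nt \<longrightarrow> N m \<le> N 0" for m
  proof (induction m rule: less_induct)
    case (less m)
    show ?case
    proof (cases m)
      case 0 then show ?thesis by simp
    next
      case (Suc k)
      show ?thesis
      proof
        assume "m \<le> Nt"
        then show "N m \<le> N 0" unfolding Suc
          by (intro step) (use less Suc N0 in auto)
      qed
    qed
  qed
  show ?thesis using all unfolding N_def by blast
qed

end
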